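(* Let $C_{1/3}$ be the middle-third Cantor set and $C(1/3)=C_{1/3}\times C_{1/3}$. Then the interior of $C(1/3)+S^1$ is non-empty.
   Context: $C_{1/3}=\{\tfrac23\sum_{k\ge1}a_k 3^{-(k-1)}: a_k\in\{0,1\}\}\subset[0,1]$; $S^1$ is the Euclidean unit circle in $\mathbb{R}^2$; $X+Y=\{x+y:x\in X,y\in Y\}$. *)

theory Defs
  imports "HOL-Analysis.Analysis"
begin

text \<open>Middle-third Cantor set, as in the paper: sums (2/3) * sum a_k 3^-(k-1), a_k in {0,1}, k>=1
  (indexed here from k = 0 with exponent 3^-k).\<close>
definition cantor_third :: "real set" where
  "cantor_third = {(2/3) * (\<Sum>k. real (a k) / 3 ^ k) | a :: nat \<Rightarrow> nat. \<forall>k. a k \<in> {0,1}}"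

definition cantor_square :: "(real \<times> real) set" where
  "cantor_square = cantor_third \<times> cantor_third"

definition unit_circle :: "(real \<times> real) set" where
  "unit_circle = {p. norm p = 1}"

definition minkowski_sum :: "'a::ab_group_add set \<Rightarrow> 'a set \<Rightarrow> 'a set" where
  "minkowski_sum X Y = {x + y | x y. x \<in> X \<and> y \<in> Y}"

end

theory Submission
  imports Defs
begin

definition EE :: "real \<Rightarrow> real \<Rightarrow> real \<Rightarrow> real \<Rightarrow> real" where
  "EE p1 p2 u v = (u - p1)^2 + (v - p2)^2"

definition hh :: "nat \<Rightarrow> real" where
  "hh n = (1/9) * (1/3)^n"

definition ch :: "real \<Rightarrow> real \<Rightarrow> real \<Rightarrow> real \<Rightarrow> real \<Rightarrow> nat \<times> nat" where
  "ch p1 p2 X Y h = (if 1 \<le> EE p1 p2 (X + h/3) (Y + h/3) then (0,0)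
     else if 1 \<le> EE p1 p2 (X + h) (Y + h/3) then (1,0)
     else if 1 \<le> EE p1 p2 (X + h/3) (Y + h) then (0,1) else (1,1))"

primrec st :: "real \<Rightarrow> real \<Rightarrow> nat \<Rightarrow> real \<times> real" where
  "st p1 p2 0 = (0,0)"
| "st p1 p2 (Suc n) = (let X = fst (st p1 p2 n); Y = snd (st p1 p2 n);
      c = ch p1 p2 X Y (hh n) in (X + 2/3 * hh n * real (fst c), Y + 2/3 * hh n * real (snd c)))"

definition dg :: "real \<Rightarrow> real \<Rightarrow> nat \<Rightarrow> nat \<times> nat" where
  "dg p1 p2 n = ch p1 p2 (fst (st p1 p2 n)) (snd (st p1 p2 n)) (hh n)"

lemma hh_Suc: "hh (Suc n) = hh n / 3"
  by (simp add: hh_def)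

lemma hh_pos: "hh n > 0"
  by (simp add: hh_def)

lemma inv:
  assumes cone: "\<And>u v. 0 \<le> u \<Longrightarrow> u \<le> 1/9 \<Longrightarrow> 0 \<le> v \<Longrightarrow> v \<le> 1/9 \<Longrightarrow>
       u - p1 \<le> v - p2 \<and> v - p2 \<le> 3 * (u - p1)"
    and s1: "EE p1 p2 0 0 \<le> 1" and s2: "1 \<le> EE p1 p2 (1/9) (1/9)"
  shows "0 \<le> fst (st p1 p2 n) \<and> fst (st p1 p2 n) + hh n \<le> 1/9 \<and>
         0 \<le> snd (st p1 p2 n) \<and> snd (st p1 p2 n) + hh n \<le> 1/9 \<and>
         EE p1 p2 (fst (st p1 p2 n)) (snd (st p1 p2 n)) \<le> 1 \<and>
         1 \<le> EE p1 p2 (fst (st p1 p2 n) + hh n) (snd (st p1 p2 n) + hh n)"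
proof (induction n)
  case 0
  then show ?case using s1 s2 by (simp add: hh_def)
next
  case (Suc n)
  obtain X Y where XY: "st p1 p2 n = (X, Y)" by (cases "st p1 p2 n") auto
  define h where "h = hh n"
  have hp: "h > 0" using hh_pos h_def by auto
  have IH: "0 \<le> X" "X + h \<le> 1/9" "0 \<le> Y" "Y + h \<le> 1/9" "EE p1 p2 X Y \<le> 1"
    "1 \<le> EE p1 p2 (X + h) (Y + h)" using Suc XY h_def by auto
  have hs: "hh (Suc n) = h/3" using hh_Suc h_def by simp
  have stS: "st p1 p2 (Suc n) = (X + 2/3*h*real (fst (ch p1 p2 X Y h)), Y + 2/3*h*real (snd (ch p1 p2 X Y h)))"
    using XY h_def by (simp add: Let_def)
  show ?case
  proof (cases "1 \<le> EE p1 p2 (X + h/3) (Y + h/3)")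
    case True
    then show ?thesis using IH hp unfolding stS hs ch_def by auto
  next
    case c1: False
    show ?thesis
    proof (cases "1 \<le> EE p1 p2 (X + h) (Y + h/3)")
      case True
      have cc: "X + 2*h/3 - p1 \<le> Y - p2" using cone[of "X + 2*h/3" Y] IH hp by auto
      have "EE p1 p2 (X + 2*h/3) Y \<le> EE p1 p2 (X + h/3) (Y + h/3)"
      proof -
        have "EE p1 p2 (X + h/3) (Y + h/3) - EE p1 p2 (X + 2*h/3) Y = (2/3)*(h*((Y - p2) - (X + 2*h/3 - p1))) + 2*h^2/9"
          unfolding EE_def by (simp add: power2_eq_square field_simps)
        moreover have "0 \<le> h*((Y - p2) - (X + 2*h/3 - p1))" using cc hp by simp
        ultimately show ?thesis using zero_le_power2[of h] by linarith
      qed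
      then show ?thesis using IH hp c1 True unfolding stS hs ch_def
        by (auto simp: algebra_simps)
    next
      case c2: False
      show ?thesis
      proof (cases "1 \<le> EE p1 p2 (X + h/3) (Y + h)")
        case True
        have cc: "Y + 2*h/3 - p2 \<le> 3 * (X - p1)" using cone[of X "Y + 2*h/3"] IH hp by auto
        have "EE p1 p2 X (Y + 2*h/3) \<le> EE p1 p2 (X + h) (Y + h/3)"
        proof -
          have "EE p1 p2 (X + h) (Y + h/3) - EE p1 p2 X (Y + 2*h/3) = (2/3)*(h*(3 * (X - p1) - (Y + 2*h/3 - p2))) + 10*h^2/9"
            unfolding EE_def by (simp add: power2_eq_square field_simps)
          moreover have "0 \<le> h*(3 * (X - p1) - (Y + 2*h/3 - p2))" using cc hp by simp
          ultimately show ?thesis using zero_le_power2[of h] by linarith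
        qed
        then show ?thesis using IH hp c1 c2 True unfolding stS hs ch_def
          by (auto simp: algebra_simps)
      next
        case c3: False
        have cc: "X + 2*h/3 - p1 \<le> Y + 2*h/3 - p2"
          using cone[of "X + 2*h/3" "Y + 2*h/3"] IH hp by auto
        have "EE p1 p2 (X + 2*h/3) (Y + 2*h/3) \<le> EE p1 p2 (X + h/3) (Y + h)"
        proof -
          have "EE p1 p2 (X + h/3) (Y + h) - EE p1 p2 (X + 2*h/3) (Y + 2*h/3) = (2/3)*(h*((Y + 2*h/3 - p2) - (X + 2*h/3 - p1))) + 2*h^2/9"
            unfolding EE_def by (simp add: power2_eq_square field_simps)
          moreover have "0 \<le> h*((Y + 2*h/3 - p2) - (X + 2*h/3 - p1))" using cc hp by simp
          ultimately show ?thesis using zero_le_power2[of h] by linarith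
        qed
        then show ?thesis using IH hp c1 c2 c3 unfolding stS hs ch_def
          by (auto simp: algebra_simps)
      qed
    qed
  qed
qed

lemma ch_le: "fst (ch p1 p2 X Y h) \<le> 1" "snd (ch p1 p2 X Y h) \<le> 1"
  by (auto simp: ch_def)

lemma st_fst: "fst (st p1 p2 n) = (\<Sum>k<n. (2/27)*(1/3)^k * real (fst (dg p1 p2 k)))"
  by (induction n) (auto simp: Let_def dg_def hh_def)

lemma st_snd: "snd (st p1 p2 n) = (\<Sum>k<n. (2/27)*(1/3)^k * real (snd (dg p1 p2 k)))"
  by (induction n) (auto simp: Let_def dg_def hh_def)

lemma summ: 
  fixes d :: "nat \<Rightarrow> nat"
  assumes "\<And>k. d k \<le> 1"
  shows "summable (\<lambda>k. (2/27)*(1/3)^k * real (d k))"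
proof (rule summable_comparison_test[of _ "\<lambda>k. (2/27)*(1/3::real)^k"])
  show "\<exists>N. \<forall>n\<ge>N. norm ((2/27)*(1/3)^n * real (d n)) \<le> (2/27)*(1/3::real)^n"
    using assms by (auto intro!: mult_left_le simp: mult_le_cancel_left1)
  show "summable (\<lambda>k. (2/27)*(1/3::real)^k)"
    by (intro summable_mult summable_geometric) simp
qed

lemma in_cantor:
  fixes d :: "nat \<Rightarrow> nat"
  assumes d: "\<And>k. d k \<le> 1"
  shows "(\<Sum>k. (2/27)*(1/3)^k * real (d k)) \<in> cantor_third"
proof -
  define a where "a k = (if k < 2 then 0 else d (k - 2))" for k
  define f where "f k = real (a k) / 3 ^ k" for k
  have fs: "(\<lambda>i. f (i + 2)) = (\<lambda>i. (1/9) * ((1/3)^i * real (d i)))"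
    by (auto simp: f_def a_def power_add field_simps)
  have sg: "summable (\<lambda>i. (1/3::real)^i * real (d i))"
  proof (rule summable_comparison_test[of _ "\<lambda>k. (1/3::real)^k"])
    show "\<exists>N. \<forall>n\<ge>N. norm ((1/3::real)^n * real (d n)) \<le> (1/3::real)^n"
      using d by (auto intro!: mult_left_le)
    show "summable (\<lambda>k. (1/3::real)^k)"
      by (intro summable_geometric) simp
  qed
  have "(\<lambda>i. f (i + 2)) sums ((1/9) * (\<Sum>i. (1/3)^i * real (d i)))"
    unfolding fs by (intro sums_mult summable_sums sg)
  then have "f sums ((1/9) * (\<Sum>i. (1/3)^i * real (d i)) + (\<Sum>i<2. f i))"
    using sums_iff_shift by blast
  moreover have "(\<Sum>i<2. f i) = 0" by (simp add: f_def a_def eval_nat_numeral)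
  ultimately have "suminf f = (1/9) * (\<Sum>i. (1/3)^i * real (d i))"
    by (simp add: sums_iff)
  moreover have "(\<Sum>k. (2/27)*(1/3)^k * real (d k)) = (2/27) * (\<Sum>i. (1/3)^i * real (d i))"
    using suminf_mult[OF sg, of "2/27"] by (simp add: mult.assoc)
  ultimately have eq: "(\<Sum>k. (2/27)*(1/3)^k * real (d k)) = (2/3) * (\<Sum>k. real (a k) / 3 ^ k)"
    unfolding f_def by simp
  have "\<forall>k. a k \<in> {0,1}" using d by (auto simp: a_def le_Suc_eq)
  then show ?thesis unfolding cantor_third_def eq by blast
qed

lemma hh_lim: "hh \<longlonglongrightarrow> 0"
  unfolding hh_def by (intro tendsto_mult_right_zero LIMSEQ_power_zero) simp_all

lemma point:
  assumes cone: "\<And>u v. 0 \<le> u \<Longrightarrow> u \<le> 1/9 \<Longrightarrow> 0 \<le> v \<Longrightarrow> v \<le> 1/9 \<Longrightarrow>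
       u - p1 \<le> v - p2 \<and> v - p2 \<le> 3 * (u - p1)"
    and s1: "EE p1 p2 0 0 \<le> 1" and s2: "1 \<le> EE p1 p2 (1/9) (1/9)"
  shows "\<exists>x y. x \<in> cantor_third \<and> y \<in> cantor_third \<and> EE p1 p2 x y = 1"
proof -
  define x where "x = (\<Sum>k. (2/27)*(1/3)^k * real (fst (dg p1 p2 k)))"
  define y where "y = (\<Sum>k. (2/27)*(1/3)^k * real (snd (dg p1 p2 k)))"
  have d1: "\<And>k. fst (dg p1 p2 k) \<le> 1" "\<And>k. snd (dg p1 p2 k) \<le> 1"
    unfolding dg_def by (rule ch_le)+
  have xl: "(\<lambda>n. fst (st p1 p2 n)) \<longlonglongrightarrow> x"
    unfolding st_fst x_def by (rule summable_LIMSEQ[OF summ[of "\<lambda>k. fst (dg p1 p2 k)", OF d1(1)]])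
  have yl: "(\<lambda>n. snd (st p1 p2 n)) \<longlonglongrightarrow> y"
    unfolding st_snd y_def by (rule summable_LIMSEQ[OF summ[of "\<lambda>k. snd (dg p1 p2 k)", OF d1(2)]])
  have l1: "(\<lambda>n. EE p1 p2 (fst (st p1 p2 n)) (snd (st p1 p2 n))) \<longlonglongrightarrow> EE p1 p2 x y"
    unfolding EE_def by (intro tendsto_intros xl yl)
  have l2: "(\<lambda>n. EE p1 p2 (fst (st p1 p2 n) + hh n) (snd (st p1 p2 n) + hh n)) \<longlonglongrightarrow> EE p1 p2 (x + 0) (y + 0)"
    unfolding EE_def by (intro tendsto_intros xl yl hh_lim)
  have "EE p1 p2 x y \<le> 1"
    using LIMSEQ_le_const2[OF l1] inv[OF cone s1 s2] by blast
  moreover have "1 \<le> EE p1 p2 x y"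
    using LIMSEQ_le_const[OF l2] inv[OF cone s1 s2] by simp
  ultimately show ?thesis using in_cantor[of "\<lambda>k. fst (dg p1 p2 k)", OF d1(1)] in_cantor[of "\<lambda>k. snd (dg p1 p2 k)", OF d1(2)] x_def y_def by fastforce
qed

theorem mainTheorem4:
  shows "interior (minkowski_sum cantor_square unit_circle) \<noteq> {}"
proof -
  define U where "U = {-(29/50)<..<-(14/25)::real} \<times> {-(77/100)<..<-(3/4)::real}"
  have oU: "open U" unfolding U_def by (intro open_Times open_greaterThanLessThan)
  have sub: "U \<subseteq> minkowski_sum cantor_square unit_circle"
  proof
    fix p assume "p \<in> U"
    then obtain p1 p2 where p: "p = (p1, p2)" and b: "-(29/50) < p1" "p1 < -(14/25)"
      "-(77/100) < p2" "p2 < -(3/4)" unfolding U_def by auto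
    have cone: "u - p1 \<le> v - p2 \<and> v - p2 \<le> 3 * (u - p1)"
      if "0 \<le> u" "u \<le> 1/9" "0 \<le> v" "v \<le> 1/9" for u v
      using that b unfolding right_diff_distrib by (intro conjI; linarith)
    have q1: "p1^2 \<le> (29/50)^2" using power_mono[of "-p1" "29/50" 2] b by simp
    have q2: "p2^2 \<le> (77/100)^2" using power_mono[of "-p2" "77/100" 2] b by simp
    have c1: "(29/50)^2 + (77/100)^2 \<le> (1::real)" by (simp add: power2_eq_square)
    have s1: "EE p1 p2 0 0 \<le> 1" using q1 q2 c1 unfolding EE_def by simp
    have q3: "(1/9 + 14/25)^2 \<le> (1/9 - p1)^2" using power_mono[of "1/9 + 14/25" "1/9 - p1" 2] b by simp
    have q4: "(1/9 + 3/4)^2 \<le> (1/9 - p2)^2" using power_mono[of "1/9 + 3/4" "1/9 - p2" 2] b by simp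
    have s2: "1 \<le> EE p1 p2 (1/9) (1/9)" using q3 q4 unfolding EE_def by (simp add: power2_eq_square)
    obtain x y where xy: "x \<in> cantor_third" "y \<in> cantor_third" "EE p1 p2 x y = 1"
      using point[OF cone s1 s2] by blast
    have "norm (p1 - x, p2 - y) = 1"
      using xy(3) unfolding EE_def norm_Pair by (simp add: power2_commute)
    then have "(p1 - x, p2 - y) \<in> unit_circle" unfolding unit_circle_def by simp
    moreover have "(x, y) \<in> cantor_square" using xy unfolding cantor_square_def by simp
    moreover have "p = (x, y) + (p1 - x, p2 - y)" using p by simp
    ultimately show "p \<in> minkowski_sum cantor_square unit_circle"
      unfolding minkowski_sum_def by blast
  qed
  have "U \<subseteq> interior (minkowski_sum cantor_square unit_circle)"
    using interior_maximal[OF sub oU] .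
  moreover have "(-(57/100), -(76/100)) \<in> U" unfolding U_def by simp
  ultimately show ?thesis by blast
qed

end
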